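(* Let $p\in\mathbb{Z}[X]$ be a non-constant polynomial with nonnegative coefficients, and let $n_k=p(k)$ for $k\ge0$. Then $(n_k)_{k\ge0}$ is not a rigidity sequence: there is no continuous Borel probability measure $\sigma$ on $\mathbb{T}$ with $\hat\sigma(n_k)\to1$.
   Context: $\hat\sigma(n)=\int_{\mathbb{T}}\lambda^n\,d\sigma(\lambda)$; continuous means atomless. A strictly increasing sequence $(n_k)$ of positive integers is a rigidity sequence if there exist a probability space and a measure-preserving transformation $\varphi$ that is weakly mixing and rigid with respect to $(n_k)$ (i.e. $\mu(\varphi^{-n_k}(A)\triangle A)\to0$ for all measurable $A$); equivalently, if there exists a continuous probability measure $\sigma$ on $\mathbb{T}$ with $\hat\sigma(n_k)\to1$. *)

theory Defs
  imports "HOL-Probability.Probability" "HOL-Computational_Algebra.Polynomial"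
begin

text \<open>A continuous Borel probability measure on T: a probability measure on the Borel
  sets of the complex plane, concentrated on the unit circle, without atoms.\<close>
definition continuous_prob_on_circle :: "complex measure \<Rightarrow> bool" where
  "continuous_prob_on_circle \<sigma> \<longleftrightarrow>
     prob_space \<sigma> \<and> sets \<sigma> = sets borel \<and>
     emeasure \<sigma> (UNIV - sphere 0 1) = 0 \<and>
     (\<forall>z. emeasure \<sigma> {z} = 0)"

definition fourier_coeff :: "complex measure \<Rightarrow> int \<Rightarrow> complex" where
  "fourier_coeff \<sigma> n = (\<integral>z. z powi n \<partial>\<sigma>)"

end

theory Submission imports Defs begin

definition D :: "complex measure \<Rightarrow> int \<Rightarrow> real" where
  "D \<sigma> m = (\<integral>z. (cmod (z powi m - 1))^2 \<partial>\<sigma>)"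

lemma meas_powi: "(\<lambda>z::complex. z powi n) \<in> borel_measurable borel"
  unfolding power_int_def by measurable

lemma unit_powi: "cmod (z::complex) = 1 \<Longrightarrow> cmod (z powi m) = 1"
  by (simp add: norm_power_int)

lemma sq_unit: "cmod (w::complex) = 1 \<Longrightarrow> (cmod (w - 1))^2 = 2 - 2 * Re w"
proof -
  assume "cmod w = 1"
  then have "(Re w)^2 + (Im w)^2 = 1" by (metis cmod_power2 one_power2)
  moreover have "(cmod (w - 1))^2 = (Re w - 1)^2 + (Im w)^2" by (simp add: cmod_power2)
  ultimately show ?thesis by (simp add: power2_eq_square algebra_simps)
qed

lemma diff_unit: "cmod (z::complex) = 1 \<Longrightarrow>
   (cmod (z powi (a - b) - 1))^2 \<le> 2 * (cmod (z powi a - 1))^2 + 2 * (cmod (z powi b - 1))^2"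
proof -
  assume z: "cmod z = 1"
  then have z0: "z \<noteq> 0" by auto
  have e: "z powi a - z powi b = z powi b * (z powi (a - b) - 1)"
    using z0 by (simp add: power_int_diff algebra_simps)
  have "cmod (z powi (a - b) - 1) = cmod (z powi a - z powi b)"
    using e unit_powi[OF z, of b] by (simp add: norm_mult)
  also have "\<dots> = cmod ((z powi a - 1) - (z powi b - 1))" by simp
  also have "\<dots> \<le> cmod (z powi a - 1) + cmod (z powi b - 1)" by (rule norm_triangle_ineq4)
  finally have h: "cmod (z powi (a - b) - 1) \<le> cmod (z powi a - 1) + cmod (z powi b - 1)" .
  have "(cmod (z powi (a - b) - 1))^2 \<le> (cmod (z powi a - 1) + cmod (z powi b - 1))^2"
    using h by (simp add: power_mono)
  also have "\<dots> \<le> 2 * (cmod (z powi a - 1))^2 + 2 * (cmod (z powi b - 1))^2"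
  proof -
    have "0 \<le> (cmod (z powi a - 1) - cmod (z powi b - 1))^2" by simp
    then show ?thesis by (simp add: power2_eq_square algebra_simps)
  qed
  finally show ?thesis .
qed

context
  fixes \<sigma> :: "complex measure"
  assumes C: "continuous_prob_on_circle \<sigma>"
begin

lemma ps: "prob_space \<sigma>" using C by (simp add: continuous_prob_on_circle_def)
lemma sets_s: "sets \<sigma> = sets borel" using C by (simp add: continuous_prob_on_circle_def)
lemma space_s: "space \<sigma> = UNIV" using sets_eq_imp_space_eq[OF sets_s] by simp

lemma AE_unit: "AE z in \<sigma>. cmod z = 1"
proof (rule AE_I[where N="UNIV - sphere 0 1"])
  show "{x \<in> space \<sigma>. cmod x \<noteq> 1} \<subseteq> UNIV - sphere 0 1" by auto
  show "emeasure \<sigma> (UNIV - sphere 0 1) = 0" using C by (simp add: continuous_prob_on_circle_def)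
  show "UNIV - sphere 0 1 \<in> sets \<sigma>" unfolding sets_s by auto
qed

lemma meas_s: "f \<in> borel_measurable borel \<Longrightarrow> f \<in> borel_measurable \<sigma>"
  using measurable_cong_sets[OF sets_s refl] by blast

lemma int_D: "integrable \<sigma> (\<lambda>z. (cmod (z powi m - 1))^2)"
proof -
  interpret prob_space \<sigma> by (rule ps)
  show ?thesis
  proof (rule integrable_const_bound[where B=4])
    show "AE z in \<sigma>. norm ((cmod (z powi m - 1))^2) \<le> 4"
      using AE_unit
    proof eventually_elim
      case (elim z)
      then have "(cmod (z powi m - 1))^2 = 2 - 2 * Re (z powi m)" by (simp add: sq_unit unit_powi)
      moreover have "\<bar>Re (z powi m)\<bar> \<le> 1" using abs_Re_le_cmod[of "z powi m"] unit_powi[OF elim] by simp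
      ultimately show ?case by simp
    qed
    show "(\<lambda>z. (cmod (z powi m - 1))^2) \<in> borel_measurable \<sigma>"
      by (rule meas_s) (use meas_powi[of m] in measurable)
  qed
qed

lemma int_F: "integrable \<sigma> (\<lambda>z. z powi m)"
proof -
  interpret prob_space \<sigma> by (rule ps)
  show ?thesis
  proof (rule integrable_const_bound[where B=1])
    show "AE z in \<sigma>. norm (z powi m) \<le> 1"
      using AE_unit by eventually_elim (simp add: unit_powi)
    show "(\<lambda>z. z powi m) \<in> borel_measurable \<sigma>" by (rule meas_s) (rule meas_powi)
  qed
qed

lemma D_eq: "D \<sigma> m = 2 - 2 * Re (fourier_coeff \<sigma> m)"
proof -
  interpret prob_space \<sigma> by (rule ps)
  have "D \<sigma> m = (\<integral>z. 2 - 2 * Re (z powi m) \<partial>\<sigma>)"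
    unfolding D_def
  proof (rule integral_cong_AE)
    show "(\<lambda>z. (cmod (z powi m - 1))^2) \<in> borel_measurable \<sigma>"
      by (rule meas_s) (use meas_powi[of m] in measurable)
    show "(\<lambda>z. 2 - 2 * Re (z powi m)) \<in> borel_measurable \<sigma>"
      by (rule meas_s) (use meas_powi[of m] in measurable)
    show "AE z in \<sigma>. (cmod (z powi m - 1))^2 = 2 - 2 * Re (z powi m)"
      using AE_unit by eventually_elim (simp add: sq_unit unit_powi)
  qed
  also have "\<dots> = 2 - 2 * Re (fourier_coeff \<sigma> m)"
    using int_F[of m] by (simp add: fourier_coeff_def prob_space)
  finally show ?thesis .
qed

lemma D_nonneg: "D \<sigma> m \<ge> 0" unfolding D_def by simp

lemma D_diff: "D \<sigma> (a - b) \<le> 2 * D \<sigma> a + 2 * D \<sigma> b"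
proof -
  have "D \<sigma> (a - b) \<le> (\<integral>z. 2 * (cmod (z powi a - 1))^2 + 2 * (cmod (z powi b - 1))^2 \<partial>\<sigma>)"
    unfolding D_def
  proof (rule integral_mono_AE)
    show "AE z in \<sigma>. (cmod (z powi (a - b) - 1))^2 \<le> 2 * (cmod (z powi a - 1))^2 + 2 * (cmod (z powi b - 1))^2"
      using AE_unit by eventually_elim (rule diff_unit)
  qed (use int_D[of a] int_D[of b] int_D[of "a-b"] in auto)
  also have "\<dots> = 2 * D \<sigma> a + 2 * D \<sigma> b"
    unfolding D_def using int_D[of a] int_D[of b] by simp
  finally show ?thesis .
qed

lemma G_diff:
  assumes "(\<lambda>k. D \<sigma> (q k)) \<longlonglongrightarrow> 0"
  shows "(\<lambda>k. D \<sigma> (q (Suc k) - q k)) \<longlonglongrightarrow> 0"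
proof (rule tendsto_sandwich[of "\<lambda>_. 0" _ sequentially "\<lambda>k. 2 * D \<sigma> (q (Suc k)) + 2 * D \<sigma> (q k)"])
  show "\<forall>\<^sub>F k in sequentially. 0 \<le> D \<sigma> (q (Suc k) - q k)" by (simp add: D_nonneg)
  show "\<forall>\<^sub>F k in sequentially. D \<sigma> (q (Suc k) - q k) \<le> 2 * D \<sigma> (q (Suc k)) + 2 * D \<sigma> (q k)"
    by (simp add: D_diff)
  have "(\<lambda>k. D \<sigma> (q (Suc k))) \<longlonglongrightarrow> 0" using assms by (rule LIMSEQ_Suc)
  then have "(\<lambda>k. 2 * D \<sigma> (q (Suc k)) + 2 * D \<sigma> (q k)) \<longlonglongrightarrow> 2 * 0 + 2 * 0"
    by (intro tendsto_intros assms)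
  then show "(\<lambda>k. 2 * D \<sigma> (q (Suc k)) + 2 * D \<sigma> (q k)) \<longlonglongrightarrow> 0" by simp
qed (simp)

lemma D_zero_False:
  assumes "D \<sigma> a = 0" "a \<noteq> 0"
  shows False
proof -
  interpret prob_space \<sigma> by (rule ps)
  have "AE z in \<sigma>. (cmod (z powi a - 1))^2 = 0"
    using assms(1) int_D[of a] unfolding D_def
    by (subst (asm) integral_nonneg_eq_0_iff_AE) auto
  then have ae: "AE z in \<sigma>. z \<in> {z. z ^ nat \<bar>a\<bar> = 1}"
    using AE_unit
  proof eventually_elim
    case (elim z)
    then have z0: "z \<noteq> 0" and p: "z powi a = 1" by auto
    show ?case
    proof (cases "a \<ge> 0")
      case True then show ?thesis using p by (simp add: power_int_def)
    next
      case False
      then have "inverse z ^ nat (- a) = 1" using p by (simp add: power_int_def)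
      then have "inverse (z ^ nat (- a)) = 1" by (simp add: power_inverse)
      then show ?thesis using False by (simp add: inverse_eq_1_iff)
    qed
  qed
  define F where "F = {z::complex. z ^ nat \<bar>a\<bar> = 1}"
  have fin: "finite F" unfolding F_def using assms(2) by (intro finite_roots_unity) simp
  have Fs: "F \<in> sets \<sigma>" using fin by (simp add: sets_s finite_imp_closed closed_Collect_eq)
  have "emeasure \<sigma> F = (\<Sum>x\<in>F. emeasure \<sigma> {x})"
    using fin by (rule emeasure_eq_sum_singleton) (simp add: sets_s)
  also have "\<dots> = 0" using C by (simp add: continuous_prob_on_circle_def)
  finally have F0: "emeasure \<sigma> F = 0" .
  obtain N where N: "{x \<in> space \<sigma>. x \<notin> F} \<subseteq> N" "emeasure \<sigma> N = 0" "N \<in> sets \<sigma>"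
    using ae unfolding F_def[symmetric] by (auto elim: AE_E)
  have "emeasure \<sigma> (space \<sigma>) \<le> emeasure \<sigma> (F \<union> N)"
    using N Fs by (intro emeasure_mono) auto
  also have "\<dots> \<le> emeasure \<sigma> F + emeasure \<sigma> N" using N Fs by (intro emeasure_subadditive) auto
  finally show False using F0 N by (simp add: emeasure_space_1)
qed

end

lemma deg_delta:
  fixes q :: "int poly"
  assumes "degree q > 0"
  shows "degree (pcompose q [:1,1:] - q) < degree q"
proof -
  let ?r = "pcompose q [:1,1:]"
  have dr: "degree ?r = degree q" by (simp add: degree_pcompose)
  have lr: "lead_coeff ?r = lead_coeff q" by (simp add: lead_coeff_comp)
  have le: "degree (?r - q) \<le> degree q" using degree_diff_le[of ?r "degree q" q] dr by simp
  show ?thesis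
  proof (rule ccontr)
    assume "\<not> ?thesis"
    then have eq: "degree (?r - q) = degree q" using le by simp
    have "lead_coeff (?r - q) = 0" using eq dr lr by simp
    then have "?r - q = 0" by (simp only: leading_coeff_0_iff)
    then show False using eq assms by simp
  qed
qed

lemma poly_main:
  fixes q :: "int poly"
  assumes C: "continuous_prob_on_circle \<sigma>"
  shows "degree q > 0 \<Longrightarrow> (\<lambda>k. D \<sigma> (poly q (int k))) \<longlonglongrightarrow> 0 \<Longrightarrow> False"
proof (induction "degree q" arbitrary: q rule: less_induct)
  case less
  define r where "r = pcompose q [:1,1:] - q"
  have pr: "poly r (int k) = poly q (int (Suc k)) - poly q (int k)" for k
    by (simp add: r_def poly_pcompose algebra_simps)
  have Gr: "(\<lambda>k. D \<sigma> (poly r (int k))) \<longlonglongrightarrow> 0"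
    unfolding pr by (rule G_diff[OF C less.prems(2)])
  have dlt: "degree r < degree q" unfolding r_def by (rule deg_delta[OF less.prems(1)])
  show False
  proof (cases "degree r > 0")
    case True
    then show False using less.hyps[OF dlt True Gr] by simp
  next
    case False
    then obtain c where rc: "r = [:c:]" by (metis degree_eq_zeroE gr0I)
    show False
    proof (cases "c = 0")
      case True
      then have "poly q (int (Suc k)) = poly q (int k)" for k using pr[of k] rc by simp
      then have cst: "poly q (int k) = poly q 0" for k by (induction k) auto
      have "q - [:poly q 0:] \<noteq> 0" using less.prems(1) by (metis degree_pCons_0 diff_eq_diff_eq diff_self eq_iff_diff_eq_0 less_irrefl)
      then have "finite {x. poly (q - [:poly q 0:]) x = 0}" by (rule poly_roots_finite)
      moreover have "range int \<subseteq> {x. poly (q - [:poly q 0:]) x = 0}" using cst by auto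
      ultimately have "finite (range int)" by (rule finite_subset[rotated])
      then show False using finite_imageD[of int UNIV] by simp
    next
      case False
      have "(\<lambda>k. D \<sigma> c) \<longlonglongrightarrow> 0" using Gr rc by simp
      then have "D \<sigma> c = 0" by (simp add: LIMSEQ_const_iff)
      then show False using D_zero_False[OF C _ False] by simp
    qed
  qed
qed

theorem mainTheorem12:
  fixes p :: "int poly"
  assumes "degree p > 0"
    and "\<forall>i. coeff p i \<ge> 0"
  shows "\<not> (\<exists>\<sigma>. continuous_prob_on_circle \<sigma> \<and>
             (\<lambda>k::nat. fourier_coeff \<sigma> (poly p (int k))) \<longlonglongrightarrow> 1)"
proof
  assume "\<exists>\<sigma>. continuous_prob_on_circle \<sigma> \<and>
             (\<lambda>k::nat. fourier_coeff \<sigma> (poly p (int k))) \<longlonglongrightarrow> 1"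
  then obtain \<sigma> where C: "continuous_prob_on_circle \<sigma>"
    and L: "(\<lambda>k::nat. fourier_coeff \<sigma> (poly p (int k))) \<longlonglongrightarrow> 1" by blast
  have "(\<lambda>k. 2 - 2 * Re (fourier_coeff \<sigma> (poly p (int k)))) \<longlonglongrightarrow> 2 - 2 * Re 1"
    by (intro tendsto_intros L)
  then have "(\<lambda>k. D \<sigma> (poly p (int k))) \<longlonglongrightarrow> 0" by (simp add: D_eq[OF C])
  then show False by (rule poly_main[OF C assms(1)])
qed
end
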